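(* Let $n\ge 2$ be a power of 2. Then $\mathsf{Pat}^{\mathsf{M}}(\mathsf{ADDR}_n) \geq 2^n$.
   Context: $\mathsf{ADDR}_n:\{0,1\}^{\log n+n}\to\{0,1\}$ is $\mathsf{ADDR}_n(x,y)=y_{\mathsf{bin}(x)}$ for $x\in\{0,1\}^{\log n}$, $y\in\{0,1\}^n$, where $\mathsf{bin}(x)\in[n]$ is the integer whose binary representation is $x$. For a Boolean function $f$ on $m$ variables with unique M\"obius expansion $f=\sum_{S\subseteq[m]}\widetilde f(S)\mathsf{AND}_S$ ($\mathsf{AND}_S(z)=\prod_{i\in S}z_i$, real coefficients) and M\"obius support $\mathcal S_f=\{S:\widetilde f(S)\neq0\}$, the pattern of an input $z$ is $(\mathsf{AND}_S(z))_{S\in\mathcal S_f}$, and $\mathsf{Pat}^{\mathsf{M}}(f)$ is the number of distinct patterns over all inputs. *)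

theory Defs
  imports Complex_Main
begin

text \<open>A Boolean function on m variables z_0,...,z_{m-1} is modelled as a predicate on
  inputs; an input z in {0,1}^m is identified with the set of indices i < m with z_i = 1.
  Only inputs z \<subseteq> {..<m} are relevant.\<close>

definition AND_fn :: "nat set \<Rightarrow> nat set \<Rightarrow> real" where
  "AND_fn S z = (if S \<subseteq> z then 1 else 0)"

definition mobius_coeff :: "nat \<Rightarrow> (nat set \<Rightarrow> bool) \<Rightarrow> nat set \<Rightarrow> real" where
  "mobius_coeff m f = (THE c. (\<forall>S. S \<notin> Pow {..<m} \<longrightarrow> c S = 0) \<and>
      (\<forall>z \<in> Pow {..<m}. (if f z then 1 else 0) = (\<Sum>S \<in> Pow {..<m}. c S * AND_fn S z)))"

definition mobius_support :: "nat \<Rightarrow> (nat set \<Rightarrow> bool) \<Rightarrow> nat set set" where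
  "mobius_support m f = {S \<in> Pow {..<m}. mobius_coeff m f S \<noteq> 0}"

definition pattern :: "nat \<Rightarrow> (nat set \<Rightarrow> bool) \<Rightarrow> nat set \<Rightarrow> (nat set \<Rightarrow> real)" where
  "pattern m f z = (\<lambda>S. if S \<in> mobius_support m f then AND_fn S z else 0)"

definition PatM :: "nat \<Rightarrow> (nat set \<Rightarrow> bool) \<Rightarrow> nat" where
  "PatM m f = card (pattern m f ` Pow {..<m})"

text \<open>bin(x) for x = (z_0,...,z_{k-1}), with z_0 the most significant bit; value in {0..<2^k}.\<close>

definition bin :: "nat \<Rightarrow> nat set \<Rightarrow> nat" where
  "bin k z = (\<Sum>i<k. if i \<in> z then 2 ^ (k - 1 - i) else 0)"

text \<open>ADDR_n for n = 2^k on k + n variables: the first k are the address x, the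
  next n are y_0,...,y_{n-1}; output is y_{bin(x)}.\<close>

definition ADDR :: "nat \<Rightarrow> nat set \<Rightarrow> bool" where
  "ADDR k z = (k + bin k z \<in> z)"

end

theory Submission imports Defs begin
lemma bin_Suc: "bin (Suc k) z = 2 * bin k z + (if k \<in> z then 1 else 0)"
proof -
  have "bin (Suc k) z = (\<Sum>i<k. if i \<in> z then 2 ^ (Suc k - 1 - i) else 0) + (if k \<in> z then 1 else 0)"
    by (simp add: bin_def sum.lessThan_Suc)
  also have "(\<Sum>i<k. if i \<in> z then 2 ^ (Suc k - 1 - i) else 0::nat) = (\<Sum>i<k. 2 * (if i \<in> z then 2 ^ (k - 1 - i) else 0))"
  proof (rule sum.cong[OF refl])
    fix i assume "i \<in> {..<k}"
    then have "Suc k - 1 - i = Suc (k - 1 - i)" by auto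
    then have "(2::nat) ^ (Suc k - 1 - i) = 2 * 2 ^ (k - 1 - i)" by (metis power_Suc)
    then show "(if i \<in> z then 2 ^ (Suc k - 1 - i) else 0) = 2 * (if i \<in> z then 2 ^ (k - 1 - i) else (0::nat))"
      by (cases "i \<in> z") simp_all
  qed
  also have "\<dots> = 2 * bin k z" by (simp add: bin_def sum_distrib_left)
  finally show ?thesis .
qed

lemma bin_restrict: "bin k (z \<inter> {..<k}) = bin k z"
  unfolding bin_def by (rule sum.cong) auto

lemma bin_lt: "bin k z < 2 ^ k"
proof (induction k)
  case 0 then show ?case by (simp add: bin_def)
next
  case (Suc k) then show ?case unfolding bin_Suc by simp
qed

lemma bin_inj: "X \<subseteq> {..<k} \<Longrightarrow> Y \<subseteq> {..<k} \<Longrightarrow> bin k X = bin k Y \<Longrightarrow> X = Y"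
proof (induction k arbitrary: X Y)
  case 0 then show ?case by auto
next
  case (Suc k)
  have e: "2 * bin k X + (if k \<in> X then 1 else 0) = 2 * bin k Y + (if k \<in> Y then 1 else 0)"
    using Suc.prems(3) by (simp add: bin_Suc)
  then have kk: "k \<in> X \<longleftrightarrow> k \<in> Y" by (cases "k \<in> X"; cases "k \<in> Y"; simp; presburger)
  with e have "bin k X = bin k Y" by (auto split: if_splits)
  then have "bin k (X \<inter> {..<k}) = bin k (Y \<inter> {..<k})" by (simp add: bin_restrict)
  then have "X \<inter> {..<k} = Y \<inter> {..<k}" by (intro Suc.IH) auto
  moreover have "X = (X \<inter> {..<k}) \<union> (X \<inter> {k})" "Y = (Y \<inter> {..<k}) \<union> (Y \<inter> {k})"
    using Suc.prems(1,2) by auto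
  ultimately show ?case using kk by auto
qed

lemma bin_surj: "j < 2 ^ k \<Longrightarrow> \<exists>X \<subseteq> {..<k}. bin k X = j"
proof (induction k arbitrary: j)
  case 0 then show ?case by (auto simp: bin_def)
next
  case (Suc k)
  then have "j div 2 < 2 ^ k" by auto
  then obtain X where X: "X \<subseteq> {..<k}" "bin k X = j div 2" using Suc.IH by blast
  define Y where "Y = X \<union> (if odd j then {k} else {})"
  have "Y \<inter> {..<k} = X" using X(1) by (auto simp: Y_def)
  then have "bin k Y = j div 2" using X(2) bin_restrict by metis
  moreover have "k \<in> Y \<longleftrightarrow> odd j" using X(1) by (auto simp: Y_def)
  ultimately have "bin (Suc k) Y = j" by (simp add: bin_Suc)
  moreover have "Y \<subseteq> {..<Suc k}" using X(1) by (auto simp: Y_def)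
  ultimately show ?case by blast
qed

lemma sum_AND: assumes "z \<subseteq> {..<m}"
  shows "(\<Sum>S \<in> Pow {..<m}. c S * AND_fn S z) = (\<Sum>S \<in> Pow z. c S)"
proof -
  have "(\<Sum>S \<in> Pow {..<m}. c S * AND_fn S z) = (\<Sum>S \<in> Pow {..<m}. if S \<in> Pow z then c S else 0)"
    by (rule sum.cong) (auto simp: AND_fn_def)
  also have "\<dots> = (\<Sum>S \<in> Pow {..<m} \<inter> Pow z. c S)"
    by (simp add: sum.inter_restrict)
  also have "Pow {..<m} \<inter> Pow z = Pow z" using assms by auto
  finally show ?thesis .
qed

definition cf :: "nat \<Rightarrow> (nat set \<Rightarrow> bool) \<Rightarrow> nat set \<Rightarrow> real" where
  "cf m f S = (if S \<subseteq> {..<m} then (\<Sum>T \<in> Pow S. (-1) ^ (card S - card T) * (if f T then 1 else 0)) else 0)"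

lemma mobius_coeff_eq: "mobius_coeff m f = cf m f"
  unfolding mobius_coeff_def
proof (rule the_equality)
  define F where "F = (\<lambda>T. if f T then 1 else (0::real))"
  show "(\<forall>S. S \<notin> Pow {..<m} \<longrightarrow> cf m f S = 0) \<and>
      (\<forall>z \<in> Pow {..<m}. (if f z then 1 else 0) = (\<Sum>S \<in> Pow {..<m}. cf m f S * AND_fn S z))"
  proof (intro conjI allI impI ballI)
    fix S assume "S \<notin> Pow {..<m}" then show "cf m f S = 0" by (simp add: cf_def)
  next
    fix z assume z: "z \<in> Pow {..<m}"
    then have fz: "finite z" by (meson PowD finite_lessThan finite_subset)
    define g where "g = (\<lambda>S. \<Sum>T \<in> Pow S. (-1) ^ card T * F T)"
    have "F z = (\<Sum>T \<in> Pow z. (-1) ^ card T * g T)"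
      by (rule inclusion_exclusion_symmetric[OF _ fz]) (simp add: g_def)
    also have "\<dots> = (\<Sum>S \<in> Pow z. cf m f S)"
    proof (rule sum.cong[OF refl])
      fix S assume S: "S \<in> Pow z"
      then have Sm: "S \<subseteq> {..<m}" using z by auto
      have fS: "finite S" using S fz finite_subset by auto
      have "(-1) ^ card S * g S = (\<Sum>T \<in> Pow S. (-1) ^ (card S + card T) * F T)"
        by (simp add: g_def sum_distrib_left power_add mult.assoc)
      also have "\<dots> = (\<Sum>T \<in> Pow S. (-1) ^ (card S - card T) * F T)"
        by (rule sum.cong[OF refl]) (simp add: fS card_mono neg_one_power_add_eq_neg_one_power_diff)
      finally show "(-1) ^ card S * g S = cf m f S" using Sm by (simp add: cf_def F_def)
    qed
    also have "\<dots> = (\<Sum>S \<in> Pow {..<m}. cf m f S * AND_fn S z)"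
      using z by (simp add: sum_AND)
    finally show "(if f z then 1 else 0) = (\<Sum>S \<in> Pow {..<m}. cf m f S * AND_fn S z)"
      by (simp add: F_def)
  qed
next
  fix c assume c: "(\<forall>S. S \<notin> Pow {..<m} \<longrightarrow> c S = 0) \<and>
      (\<forall>z \<in> Pow {..<m}. (if f z then 1 else 0) = (\<Sum>S \<in> Pow {..<m}. c S * AND_fn S z))"
  show "c = cf m f"
  proof
    fix S
    show "c S = cf m f S"
    proof (cases "S \<subseteq> {..<m}")
      case False then show ?thesis using c by (simp add: cf_def)
    next
      case True
      have fS: "finite S" using True finite_subset by auto
      define c' where "c' = (\<lambda>S. if S \<subseteq> {..<m} then c S else 0)"
      have "c' S = (\<Sum>T \<in> Pow S. (-1) ^ (card S - card T) * sum c' (Pow T))"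
        by (rule inclusion_exclusion_mobius[OF _ fS]) simp
      also have "\<dots> = (\<Sum>T \<in> Pow S. (-1) ^ (card S - card T) * (if f T then 1 else 0))"
      proof (rule sum.cong[OF refl])
        fix T assume "T \<in> Pow S"
        then have T: "T \<subseteq> {..<m}" using True by auto
        then have "sum c' (Pow T) = sum c (Pow T)"
          by (intro sum.cong) (auto simp: c'_def)
        also have "\<dots> = (if f T then 1 else 0)" using c T by (simp add: sum_AND)
        finally show "(-1) ^ (card S - card T) * sum c' (Pow T) = (-1) ^ (card S - card T) * (if f T then 1 else 0)"
          by simp
      qed
      finally show ?thesis using True by (simp add: c'_def cf_def)
    qed
  qed
qed

lemma support_Sj:
  assumes n: "n = 2 ^ k" and j: "j < n"
  shows "{..<k} \<union> {k + j} \<in> mobius_support (k + n) (ADDR k)"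
proof -
  define Sj where "Sj = {..<k} \<union> {k + j}"
  obtain X where X: "X \<subseteq> {..<k}" "bin k X = j" using bin_surj j n by blast
  define T0 where "T0 = X \<union> {k + j}"
  have T0S: "T0 \<in> Pow Sj" using X by (auto simp: T0_def Sj_def)
  have key: "ADDR k T \<longleftrightarrow> T = T0" if T: "T \<subseteq> Sj" for T
  proof
    assume "T = T0"
    moreover have "T0 \<inter> {..<k} = X" using X by (auto simp: T0_def)
    ultimately have "bin k T = j" using X bin_restrict by metis
    then show "ADDR k T" using \<open>T = T0\<close> by (simp add: ADDR_def T0_def)
  next
    assume A: "ADDR k T"
    then have "k + bin k T \<in> Sj" using T unfolding ADDR_def by auto
    then have bj: "bin k T = j" by (auto simp: Sj_def)
    then have be: "bin k (T \<inter> {..<k}) = bin k X" using X bin_restrict by metis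
    have TX: "T \<inter> {..<k} = X" using bin_inj[OF _ X(1) be] by blast
    have kj: "k + j \<in> T" using A bj by (simp add: ADDR_def)
    have "T = (T \<inter> {..<k}) \<union> (T \<inter> {k + j})" using T by (auto simp: Sj_def)
    then show "T = T0" using TX kj by (auto simp: T0_def)
  qed
  have "cf (k + n) (ADDR k) Sj = (\<Sum>T \<in> Pow Sj. (-1) ^ (card Sj - card T) * (if ADDR k T then 1 else 0))"
  proof -
    have "Sj \<subseteq> {..<k + n}" using j by (auto simp: Sj_def)
    then show ?thesis by (simp only: cf_def if_True)
  qed
  also have "\<dots> = (\<Sum>T \<in> Pow Sj. if T = T0 then (-1) ^ (card Sj - card T) else 0)"
    by (rule sum.cong[OF refl]) (simp add: key[OF PowD])
  also have "\<dots> = (-1) ^ (card Sj - card T0)"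
  proof -
    have fin: "finite (Pow Sj)" by (simp add: Sj_def)
    show ?thesis using T0S by (simp add: sum.delta[OF fin])
  qed
  finally have "cf (k + n) (ADDR k) Sj \<noteq> 0" by simp
  moreover have "Sj \<in> Pow {..<k + n}" using j by (auto simp: Sj_def)
  ultimately show ?thesis by (simp add: mobius_support_def mobius_coeff_eq Sj_def)
qed

theorem claimA4:
  fixes n k :: nat
  assumes "2 \<le> n" and "n = 2 ^ k"
  shows "2 ^ n \<le> PatM (k + n) (ADDR k)"
proof -
  define inp where "inp = (\<lambda>T. {..<k} \<union> (\<lambda>j. k + j) ` T)"
  define p where "p = pattern (k + n) (ADDR k)"
  have pv: "p (inp T) ({..<k} \<union> {k + j}) = (if j \<in> T then 1 else 0)" if "j < n" for T j
  proof -
    have "({..<k} \<union> {k + j} \<subseteq> inp T) \<longleftrightarrow> j \<in> T"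
      by (auto simp: inp_def)
    then show ?thesis
      using support_Sj[OF assms(2) that] by (simp add: p_def pattern_def AND_fn_def)
  qed
  have inj: "inj_on (p \<circ> inp) (Pow {..<n})"
  proof (rule inj_onI)
    fix T T' assume T: "T \<in> Pow {..<n}" and T': "T' \<in> Pow {..<n}"
      and e: "(p \<circ> inp) T = (p \<circ> inp) T'"
    have "j \<in> T \<longleftrightarrow> j \<in> T'" if "j < n" for j
      using pv[OF that, of T] pv[OF that, of T'] e
      by (cases "j \<in> T"; cases "j \<in> T'"; simp)
    then show "T = T'" using T T' by (meson PowD lessThan_iff subset_antisym subset_eq)
  qed
  have sub: "(p \<circ> inp) ` Pow {..<n} \<subseteq> p ` Pow {..<k + n}"
  proof
    fix x assume "x \<in> (p \<circ> inp) ` Pow {..<n}"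
    then obtain T where T: "T \<subseteq> {..<n}" "x = p (inp T)" by auto
    have "inp T \<in> Pow {..<k + n}" using T(1) by (auto simp: inp_def)
    then show "x \<in> p ` Pow {..<k + n}" using T(2) by blast
  qed
  have "2 ^ n = card (Pow {..<n})" by (simp add: card_Pow)
  also have "\<dots> = card ((p \<circ> inp) ` Pow {..<n})" using card_image[OF inj] by simp
  also have "\<dots> \<le> card (p ` Pow {..<k + n})" by (rule card_mono[OF _ sub]) simp
  finally show ?thesis by (simp add: PatM_def p_def)
qed

end
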